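(* Assume $L/F$ is ramified. If $\Phi\in\pi_{\tau,\chi}^{K_n}$ with $n\ge1$, then $\operatorname{supp}(\Phi)\subset\mathfrak p_L^{c-n}$ and $\Phi$ is constant on cosets of $\mathfrak p_L^{c+n-1}$.
   Context: $F$ is a $p$-adic field with $p\ne2$, ring of integers $\mathcal O$ with maximal ideal $\mathfrak p$, residue field of order $q$. $L/F$ is a quadratic extension with ring of integers $\mathcal O_L$, maximal ideal $\mathfrak p_L$, conjugation $x\mapsto\overline x$, norm $N:L\to F$, $L^1=\ker N$; $\omega$ is the nontrivial character of $F^\times/N(L^\times)$. $\chi$ is a character of $L^\times$ not factoring through $N$. $\tau$ is a nontrivial additive character of $F$ with conductor $\mathfrak p^c$, i.e. $\tau$ is trivial on $\mathfrak p^m$ iff $m\ge c$. Put $\langle x,y\rangle=\tau(\operatorname{tr}_{L/F}(xy))$ and $\widehat\Phi(x)=\int_L\Phi(y)\langle x,y\rangle\,dy$ for Schwartz functions $\Phi$ on $L$, with Haar measure normalized so that $\widehat{\widehat\Phi}(x)=\Phi(-x)$. $\mathcal S(L)_\chi$ is the space of Schwartz functions with $\Phi(xy)=\chi(y)^{-1}\Phi(x)$ for $y\in L^1$. $G_+=\{g\in GL_2(F):\det g\in N(L^\times)\}$, and $\pi_{\tau,\chi}$ is the irreducible representation of $G_+$ on $\mathcal S(L)_\chi$ satisfying $\pi_{\tau,\chi}\begin{pmatrix}1&u\\0&1\end{pmatrix}\Phi(x)=\tau(uN(x))\Phi(x)$, $\pi_{\tau,\chi}\begin{pmatrix}a&0\\0&a^{-1}\end{pmatrix}\Phi(x)=\omega(a)|a|_L^{1/2}\Phi(ax)$,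 $\pi_{\tau,\chi}\begin{pmatrix}0&1\\-1&0\end{pmatrix}\Phi(x)=\gamma\widehat\Phi(\overline x)$ for some complex $\gamma$ with $|\gamma|=1$. $K_n$ is the principal congruence subgroup of $GL_2(F)$ of level $n$ (contained in $G_+$ for $n\ge1$). *)

theory Defs
  imports Complex_Main
begin

text \<open>The quadratic extension L is modelled by a type 'l (a field) carrying
 a discrete valuation v (the normalised valuation of L) and the conjugation sigma,
 a field automorphism of order exactly 2.  F is the fixed field of sigma.
 A value v 0 is irrelevant: membership in ideals is always written with x = 0 as a separate case.\<close>

definition pL :: "('l::field \<Rightarrow> int) \<Rightarrow> int \<Rightarrow> 'l set" where
  "pL v k = {x. x = 0 \<or> k \<le> v x}"

definition discrete_valuation :: "('l::field \<Rightarrow> int) \<Rightarrow> bool" where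
  "discrete_valuation v \<longleftrightarrow>
     (\<forall>x y. x \<noteq> 0 \<longrightarrow> y \<noteq> 0 \<longrightarrow> v (x * y) = v x + v y) \<and>
     (\<forall>x y. x \<noteq> 0 \<longrightarrow> y \<noteq> 0 \<longrightarrow> x + y \<noteq> 0 \<longrightarrow> min (v x) (v y) \<le> v (x + y)) \<and>
     (\<exists>\<pi>. \<pi> \<noteq> 0 \<and> v \<pi> = 1)"

definition complete_valuation :: "('l::field \<Rightarrow> int) \<Rightarrow> bool" where
  "complete_valuation v \<longleftrightarrow>
     (\<forall>s::nat \<Rightarrow> 'l. (\<forall>k. \<exists>N. \<forall>m\<ge>N. \<forall>n\<ge>N. s m - s n \<in> pL v k) \<longrightarrow>
        (\<exists>l. \<forall>k. \<exists>N. \<forall>n\<ge>N. s n - l \<in> pL v k))"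

definition residue_field :: "('l::field \<Rightarrow> int) \<Rightarrow> 'l set set" where
  "residue_field v = (\<lambda>x. {y \<in> pL v 0. x - y \<in> pL v 1}) ` pL v 0"

definition qL :: "('l::field \<Rightarrow> int) \<Rightarrow> nat" where
  "qL v = card (residue_field v)"

definition padic_field :: "('l::field \<Rightarrow> int) \<Rightarrow> bool" where
  "padic_field v \<longleftrightarrow> (\<forall>n::nat. 0 < n \<longrightarrow> of_nat n \<noteq> (0::'l)) \<and>
     discrete_valuation v \<and> complete_valuation v \<and> finite (residue_field v)"

definition quadratic_conj :: "('l::field \<Rightarrow> 'l) \<Rightarrow> bool" where
  "quadratic_conj \<sigma> \<longleftrightarrow> (\<forall>x y. \<sigma> (x + y) = \<sigma> x + \<sigma> y) \<and> (\<forall>x y. \<sigma> (x * y) = \<sigma> x * \<sigma> y) \<and>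
     (\<forall>x. \<sigma> (\<sigma> x) = x) \<and> (\<exists>x. \<sigma> x \<noteq> x)"

definition Fld :: "('l \<Rightarrow> 'l) \<Rightarrow> 'l set" where
  "Fld \<sigma> = {a. \<sigma> a = a}"

definition Nm :: "('l::field \<Rightarrow> 'l) \<Rightarrow> 'l \<Rightarrow> 'l" where
  "Nm \<sigma> x = x * \<sigma> x"

definition tr :: "('l::field \<Rightarrow> 'l) \<Rightarrow> 'l \<Rightarrow> 'l" where
  "tr \<sigma> x = x + \<sigma> x"

definition norms :: "('l::field \<Rightarrow> 'l) \<Rightarrow> 'l set" where
  "norms \<sigma> = {Nm \<sigma> x | x. x \<noteq> 0}"

text \<open>L/F ramified: v_L(F^x) = 2Z (otherwise v_L(F^x) = Z).\<close>
definition ramified :: "('l::field \<Rightarrow> int) \<Rightarrow> ('l \<Rightarrow> 'l) \<Rightarrow> bool" where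
  "ramified v \<sigma> \<longleftrightarrow> (\<forall>a \<in> Fld \<sigma>. a \<noteq> 0 \<longrightarrow> even (v a))"

definition ram_index :: "('l::field \<Rightarrow> int) \<Rightarrow> ('l \<Rightarrow> 'l) \<Rightarrow> int" where
  "ram_index v \<sigma> = (if ramified v \<sigma> then 2 else 1)"

definition pF :: "('l::field \<Rightarrow> int) \<Rightarrow> ('l \<Rightarrow> 'l) \<Rightarrow> int \<Rightarrow> 'l set" where
  "pF v \<sigma> m = {a \<in> Fld \<sigma>. a = 0 \<or> ram_index v \<sigma> * m \<le> v a}"

definition add_char_conductor :: "('l::field \<Rightarrow> int) \<Rightarrow> ('l \<Rightarrow> 'l) \<Rightarrow> ('l \<Rightarrow> complex) \<Rightarrow> int \<Rightarrow> bool" where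
  "add_char_conductor v \<sigma> \<tau> c \<longleftrightarrow>
     (\<forall>a \<in> Fld \<sigma>. \<forall>b \<in> Fld \<sigma>. \<tau> (a + b) = \<tau> a * \<tau> b) \<and> (\<forall>a \<in> Fld \<sigma>. \<tau> a \<noteq> 0) \<and>
     (\<forall>m. (\<forall>a \<in> pF v \<sigma> m. \<tau> a = 1) \<longleftrightarrow> c \<le> m)"

definition mult_char :: "('l::field \<Rightarrow> int) \<Rightarrow> ('l \<Rightarrow> complex) \<Rightarrow> bool" where
  "mult_char v \<chi> \<longleftrightarrow>
     (\<forall>x y. x \<noteq> 0 \<longrightarrow> y \<noteq> 0 \<longrightarrow> \<chi> (x * y) = \<chi> x * \<chi> y) \<and> (\<forall>x. x \<noteq> 0 \<longrightarrow> \<chi> x \<noteq> 0) \<and>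
     (\<exists>k \<ge> 1. \<forall>x. x - 1 \<in> pL v k \<longrightarrow> \<chi> x = 1)"

definition factors_through_norm :: "('l::field \<Rightarrow> 'l) \<Rightarrow> ('l \<Rightarrow> complex) \<Rightarrow> bool" where
  "factors_through_norm \<sigma> \<chi> \<longleftrightarrow> (\<exists>\<psi>. \<forall>x. x \<noteq> 0 \<longrightarrow> \<chi> x = \<psi> (Nm \<sigma> x))"

text \<open>omega: the nontrivial character of F^x / N(L^x) (a group of order 2).\<close>
definition omega :: "('l::field \<Rightarrow> 'l) \<Rightarrow> 'l \<Rightarrow> complex" where
  "omega \<sigma> a = (if a \<in> norms \<sigma> then 1 else -1)"

definition absL :: "('l::field \<Rightarrow> int) \<Rightarrow> 'l \<Rightarrow> real" where
  "absL v x = (if x = 0 then 0 else real (qL v) powr (- real_of_int (v x)))"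

definition schwartz :: "('l::field \<Rightarrow> int) \<Rightarrow> ('l \<Rightarrow> complex) \<Rightarrow> bool" where
  "schwartz v \<Phi> \<longleftrightarrow> (\<exists>k. \<forall>x y. x - y \<in> pL v k \<longrightarrow> \<Phi> x = \<Phi> y) \<and>
                      (\<exists>m. \<forall>x. \<Phi> x \<noteq> 0 \<longrightarrow> x \<in> pL v m)"

definition haar_integral :: "('l::field \<Rightarrow> int) \<Rightarrow> (('l \<Rightarrow> complex) \<Rightarrow> complex) \<Rightarrow> bool" where
  "haar_integral v I \<longleftrightarrow>
     (\<forall>\<Phi> \<Psi>. schwartz v \<Phi> \<longrightarrow> schwartz v \<Psi> \<longrightarrow> I (\<lambda>x. \<Phi> x + \<Psi> x) = I \<Phi> + I \<Psi>) \<and>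
     (\<forall>z \<Phi>. schwartz v \<Phi> \<longrightarrow> I (\<lambda>x. z * \<Phi> x) = z * I \<Phi>) \<and>
     (\<forall>\<Phi> a. schwartz v \<Phi> \<longrightarrow> I (\<lambda>x. \<Phi> (x + a)) = I \<Phi>) \<and>
     (\<forall>\<Phi>. schwartz v \<Phi> \<longrightarrow> (\<forall>x. Im (\<Phi> x) = 0 \<and> 0 \<le> Re (\<Phi> x)) \<longrightarrow>
            Im (I \<Phi>) = 0 \<and> 0 \<le> Re (I \<Phi>)) \<and>
     (\<exists>\<Phi>. schwartz v \<Phi> \<and> I \<Phi> \<noteq> 0)"

definition fourier :: "('l::field \<Rightarrow> 'l) \<Rightarrow> ('l \<Rightarrow> complex) \<Rightarrow> (('l \<Rightarrow> complex) \<Rightarrow> complex)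
    \<Rightarrow> ('l \<Rightarrow> complex) \<Rightarrow> 'l \<Rightarrow> complex" where
  "fourier \<sigma> \<tau> I \<Phi> x = I (\<lambda>y. \<Phi> y * \<tau> (tr \<sigma> (x * y)))"

definition S_chi :: "('l::field \<Rightarrow> int) \<Rightarrow> ('l \<Rightarrow> 'l) \<Rightarrow> ('l \<Rightarrow> complex) \<Rightarrow> ('l \<Rightarrow> complex) set" where
  "S_chi v \<sigma> \<chi> = {\<Phi>. schwartz v \<Phi> \<and> (\<forall>x y. Nm \<sigma> y = 1 \<longrightarrow> \<Phi> (x * y) = inverse (\<chi> y) * \<Phi> x)}"

text \<open>2x2 matrices (a b; c d) as quadruples (a, b, c, d).\<close>
type_synonym 'a mat2 = "'a \<times> 'a \<times> 'a \<times> 'a"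

fun mmul :: "'a::ring mat2 \<Rightarrow> 'a mat2 \<Rightarrow> 'a mat2" where
  "mmul (a, b, c, d) (a', b', c', d') = (a*a' + b*c', a*b' + b*d', c*a' + d*c', c*b' + d*d')"

fun mdet :: "'a::comm_ring mat2 \<Rightarrow> 'a" where
  "mdet (a, b, c, d) = a * d - b * c"

definition Gplus :: "('l::field \<Rightarrow> 'l) \<Rightarrow> 'l mat2 set" where
  "Gplus \<sigma> = {(a, b, c, d). a \<in> Fld \<sigma> \<and> b \<in> Fld \<sigma> \<and> c \<in> Fld \<sigma> \<and> d \<in> Fld \<sigma> \<and>
                            mdet (a, b, c, d) \<in> norms \<sigma>}"

definition Kcong :: "('l::field \<Rightarrow> int) \<Rightarrow> ('l \<Rightarrow> 'l) \<Rightarrow> int \<Rightarrow> 'l mat2 set" where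
  "Kcong v \<sigma> n = {(a, b, c, d). a - 1 \<in> pF v \<sigma> n \<and> b \<in> pF v \<sigma> n \<and> c \<in> pF v \<sigma> n \<and> d - 1 \<in> pF v \<sigma> n \<and>
       a \<in> pF v \<sigma> 0 \<and> d \<in> pF v \<sigma> 0 \<and> mdet (a, b, c, d) \<noteq> 0 \<and>
       inverse (mdet (a, b, c, d)) \<in> pF v \<sigma> 0}"

definition invariant_subspace :: "('l mat2 set) \<Rightarrow> ('l mat2 \<Rightarrow> ('l \<Rightarrow> complex) \<Rightarrow> ('l \<Rightarrow> complex))
     \<Rightarrow> ('l \<Rightarrow> complex) set \<Rightarrow> ('l \<Rightarrow> complex) set \<Rightarrow> bool" where
  "invariant_subspace G \<pi> S V \<longleftrightarrow> V \<subseteq> S \<and> (\<lambda>_. 0) \<in> V \<and>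
     (\<forall>\<Phi>\<in>V. \<forall>\<Psi>\<in>V. (\<lambda>x. \<Phi> x + \<Psi> x) \<in> V) \<and> (\<forall>z. \<forall>\<Phi>\<in>V. (\<lambda>x. z * \<Phi> x) \<in> V) \<and>
     (\<forall>g\<in>G. \<forall>\<Phi>\<in>V. \<pi> g \<Phi> \<in> V)"

definition irred_rep :: "('l::field mat2 set) \<Rightarrow> ('l mat2 \<Rightarrow> ('l \<Rightarrow> complex) \<Rightarrow> ('l \<Rightarrow> complex))
     \<Rightarrow> ('l \<Rightarrow> complex) set \<Rightarrow> bool" where
  "irred_rep G \<pi> S \<longleftrightarrow>
     (\<forall>g\<in>G. \<forall>\<Phi>\<in>S. \<pi> g \<Phi> \<in> S) \<and>
     (\<forall>g\<in>G. \<forall>\<Phi>\<in>S. \<forall>\<Psi>\<in>S. \<pi> g (\<lambda>x. \<Phi> x + \<Psi> x) = (\<lambda>x. \<pi> g \<Phi> x + \<pi> g \<Psi> x)) \<and>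
     (\<forall>g\<in>G. \<forall>z. \<forall>\<Phi>\<in>S. \<pi> g (\<lambda>x. z * \<Phi> x) = (\<lambda>x. z * \<pi> g \<Phi> x)) \<and>
     (\<forall>\<Phi>\<in>S. \<pi> (1, 0, 0, 1) \<Phi> = \<Phi>) \<and>
     (\<forall>g\<in>G. \<forall>h\<in>G. \<forall>\<Phi>\<in>S. \<pi> (mmul g h) \<Phi> = \<pi> g (\<pi> h \<Phi>)) \<and>
     S \<noteq> {\<lambda>_. 0} \<and>
     (\<forall>V. invariant_subspace G \<pi> S V \<longrightarrow> V = {\<lambda>_. 0} \<or> V = S)"

definition weil_formulas :: "('l::field \<Rightarrow> int) \<Rightarrow> ('l \<Rightarrow> 'l) \<Rightarrow> ('l \<Rightarrow> complex) \<Rightarrow> (('l \<Rightarrow> complex) \<Rightarrow> complex)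
     \<Rightarrow> ('l \<Rightarrow> complex) \<Rightarrow> ('l mat2 \<Rightarrow> ('l \<Rightarrow> complex) \<Rightarrow> ('l \<Rightarrow> complex)) \<Rightarrow> bool" where
  "weil_formulas v \<sigma> \<tau> I \<chi> \<pi> \<longleftrightarrow>
     (\<forall>u \<in> Fld \<sigma>. \<forall>\<Phi> \<in> S_chi v \<sigma> \<chi>. \<pi> (1, u, 0, 1) \<Phi> = (\<lambda>x. \<tau> (u * Nm \<sigma> x) * \<Phi> x)) \<and>
     (\<forall>a \<in> Fld \<sigma>. a \<noteq> 0 \<longrightarrow> (\<forall>\<Phi> \<in> S_chi v \<sigma> \<chi>. \<pi> (a, 0, 0, inverse a) \<Phi> =
         (\<lambda>x. omega \<sigma> a * complex_of_real (sqrt (absL v a)) * \<Phi> (a * x)))) \<and>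
     (\<exists>\<gamma>. cmod \<gamma> = 1 \<and> (\<forall>\<Phi> \<in> S_chi v \<sigma> \<chi>. \<pi> (0, 1, -1, 0) \<Phi> = (\<lambda>x. \<gamma> * fourier \<sigma> \<tau> I \<Phi> (\<sigma> x))))"

end

theory Submission
  imports Defs
begin

lemma dv_mult: "discrete_valuation v \<Longrightarrow> x \<noteq> 0 \<Longrightarrow> y \<noteq> 0 \<Longrightarrow> v (x * y) = v x + v y"
  unfolding discrete_valuation_def by blast

lemma dv_ge: "discrete_valuation v \<Longrightarrow> x \<noteq> 0 \<Longrightarrow> y \<noteq> 0 \<Longrightarrow> x + y \<noteq> 0 \<Longrightarrow> min (v x) (v y) \<le> v (x + y)"
  unfolding discrete_valuation_def by blast

lemma dv_1: "discrete_valuation v \<Longrightarrow> v 1 = 0"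
  using dv_mult[of v 1 1] by simp

lemma dv_inv: "discrete_valuation v \<Longrightarrow> x \<noteq> 0 \<Longrightarrow> v (inverse x) = - v x"
  using dv_mult[of v x "inverse x"] dv_1[of v] by simp

lemma dv_neg: "discrete_valuation v \<Longrightarrow> v (- x) = v x"
proof (cases "x = 0")
  case True then show ?thesis by simp
next
  case False
  assume d: "discrete_valuation v"
  have "v ((-1) * (-1)) = v (-1) + v (-1)" using dv_mult[OF d, of "-1" "-1"] by simp
  then have "v (-1) = 0" using dv_1[OF d] by simp
  then show ?thesis using dv_mult[OF d, of "-1" x] False by simp
qed

lemma dv_strict:
  assumes d: "discrete_valuation v" and x: "x \<noteq> 0" and y: "y \<noteq> 0" and lt: "v x < v y"
  shows "x + y \<noteq> 0 \<and> v (x + y) = v x"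
proof -
  have nz: "x + y \<noteq> 0"
  proof
    assume "x + y = 0" then have "y = - x" by (metis neg_eq_iff_add_eq_0)
    then show False using lt dv_neg[OF d, of x] by simp
  qed
  have ge: "v x \<le> v (x + y)" using dv_ge[OF d x y nz] lt by simp
  have "min (v (x + y)) (v (- y)) \<le> v (x + y + - y)"
    using dv_ge[OF d nz, of "- y"] y x by simp
  then have "min (v (x + y)) (v y) \<le> v x" using dv_neg[OF d, of y] by simp
  then have "v (x + y) \<le> v x" using lt by simp
  with ge nz show ?thesis by simp
qed

lemma dv_strict2:
  assumes d: "discrete_valuation v" and x: "x \<noteq> 0" and y: "y \<noteq> 0" and ne: "v x \<noteq> v y"
  shows "x + y \<noteq> 0 \<and> v (x + y) = min (v x) (v y)"
proof (cases "v x < v y")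
  case True then show ?thesis using dv_strict[OF d x y] by simp
next
  case False then have "v y < v x" using ne by simp
  then show ?thesis using dv_strict[OF d y x] by (simp add: add.commute)
qed

lemma qc_add: "quadratic_conj s \<Longrightarrow> s (x + y) = s x + s y"
  unfolding quadratic_conj_def by blast
lemma qc_mult: "quadratic_conj s \<Longrightarrow> s (x * y) = s x * s y"
  unfolding quadratic_conj_def by blast
lemma qc_invol: "quadratic_conj s \<Longrightarrow> s (s x) = x"
  unfolding quadratic_conj_def by blast

lemma qc_0: "quadratic_conj s \<Longrightarrow> s 0 = (0::'l::field)"
proof -
  assume q: "quadratic_conj s"
  have "s 0 = s 0 + s 0" using qc_add[OF q, of 0 0] by simp
  then show ?thesis by (metis add_cancel_right_right)
qed

lemma qc_nz: "quadratic_conj s \<Longrightarrow> (x::'l::field) \<noteq> 0 \<Longrightarrow> s x \<noteq> 0"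
  using qc_invol[of s x] qc_0[of s] by metis

lemma qc_1: "quadratic_conj s \<Longrightarrow> s 1 = (1::'l::field)"
proof -
  assume q: "quadratic_conj s"
  have "s 1 = s 1 * s 1" using qc_mult[OF q, of 1 1] by simp
  moreover have "s 1 \<noteq> 0" using qc_nz[OF q, of 1] by simp
  ultimately show ?thesis by (metis mult_cancel_left1)
qed

lemma qc_neg: "quadratic_conj s \<Longrightarrow> s (- x) = - s (x::'l::field)"
proof -
  assume q: "quadratic_conj s"
  have "s x + s (- x) = 0" using qc_add[OF q, of x "- x"] qc_0[OF q] by simp
  then show ?thesis by (metis neg_eq_iff_add_eq_0)
qed

lemma qc_diff: "quadratic_conj s \<Longrightarrow> s (x - y) = s x - s (y::'l::field)"
  using qc_add[of s x "- y"] qc_neg[of s y] by simp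

lemma qc_inverse: "quadratic_conj s \<Longrightarrow> s (inverse x) = inverse (s (x::'l::field))"
proof (cases "x = 0")
  case True then show "quadratic_conj s \<Longrightarrow> ?thesis" using qc_0[of s] by simp
next
  case False
  assume q: "quadratic_conj s"
  have "s x * s (inverse x) = 1" using qc_mult[OF q, of x "inverse x"] qc_1[OF q] False by simp
  then show ?thesis by (metis inverse_unique)
qed

lemma qc_divide: "quadratic_conj s \<Longrightarrow> s (x / y) = s x / s (y::'l::field)"
  by (simp add: divide_inverse qc_mult qc_inverse)

lemma Nm_Fld: "quadratic_conj s \<Longrightarrow> Nm s (x::'l::field) \<in> Fld s"
  unfolding Nm_def Fld_def by (simp add: qc_mult qc_invol mult.commute)

lemma tr_Fld: "quadratic_conj s \<Longrightarrow> tr s (x::'l::field) \<in> Fld s"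
  unfolding tr_def Fld_def by (simp add: qc_add qc_invol add.commute)

lemma even_F: "ramified v s \<Longrightarrow> a \<in> Fld s \<Longrightarrow> a \<noteq> 0 \<Longrightarrow> even (v a)"
  unfolding ramified_def by blast

lemma v_sigma:
  fixes v :: "'l::field \<Rightarrow> int"
  assumes d: "discrete_valuation v" and q: "quadratic_conj s" and r: "ramified v s" and x: "x \<noteq> 0"
  shows "v (s x) = v x"
proof (rule ccontr)
  assume ne: "v (s x) \<noteq> v x"
  have sx: "s x \<noteq> 0" using qc_nz[OF q x] .
  have evN: "even (v z + v (s z))" if "z \<noteq> 0" for z
  proof -
    have "Nm s z \<in> Fld s" using Nm_Fld[OF q] .
    moreover have "Nm s z \<noteq> 0" using that qc_nz[OF q that] by (simp add: Nm_def)
    ultimately have "even (v (Nm s z))" using even_F[OF r] by blast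
    then show ?thesis using dv_mult[OF d that qc_nz[OF q that]] by (simp add: Nm_def)
  qed
  define y where "y = x / s x"
  define m where "m = v x - v (s x)"
  have y0: "y \<noteq> 0" using x sx by (simp add: y_def)
  have sy: "s y = s x / x" using q by (simp add: y_def qc_divide qc_invol)
  have vy: "v y = m" using dv_mult[OF d x, of "inverse (s x)"] dv_inv[OF d sx] sx
    by (simp add: y_def m_def divide_inverse)
  have vsy: "v (s y) = - m" using dv_mult[OF d sx, of "inverse x"] dv_inv[OF d x] x
    by (simp add: sy m_def divide_inverse)
  have m0: "m \<noteq> 0" using ne by (simp add: m_def)
  have evm: "even m" using evN[OF x] by (simp add: m_def)
  have ysy: "y - s y \<noteq> 0"
  proof
    assume "y - s y = 0" then have "y = s y" by simp
    then show False using vy vsy m0 by simp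
  qed
  obtain p where p0: "p \<noteq> 0" and vp: "v p = 1" using d unfolding discrete_valuation_def by blast
  define b where "b = (p - s p) / (y - s y)"
  define a where "a = p - b * y"
  have "s b = (s p - p) / (s y - y)" using q by (simp add: b_def qc_divide qc_diff qc_invol)
  then have bF: "s b = b" by (metis b_def minus_diff_eq minus_divide_divide)
  have aF: "s a = a"
  proof -
    have "b * (y - s y) = p - s p" using ysy by (simp add: b_def)
    then have e: "b * y - b * s y = p - s p" by (simp add: right_diff_distrib)
    have "s a = s p - b * s y" using q bF by (simp add: a_def qc_diff qc_mult)
    also have "\<dots> = p - b * y" using e by (simp add: algebra_simps)
    finally show ?thesis by (simp add: a_def)
  qed
  have pab: "p = a + b * y" by (simp add: a_def)
  have spab: "s p = a + b * s y" using q aF bF by (simp add: pab qc_add qc_mult)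
  have sp0: "s p \<noteq> 0" using qc_nz[OF q p0] .
  have oddsp: "odd (v (s p))" using evN[OF p0] vp by simp
  have evF: "even (v z)" if "s z = z" "z \<noteq> 0" for z
    using even_F[OF r, of z] that by (simp add: Fld_def)
  show False
  proof (cases "b = 0")
    case True then have "p = a" by (simp add: pab)
    then show False using evF[OF aF] p0 vp by simp
  next
    case b0: False
    have vby: "v (b * y) = v b + m" using dv_mult[OF d b0 y0] vy by simp
    have vbsy: "v (b * s y) = v b - m" using dv_mult[OF d b0 qc_nz[OF q y0]] vsy by simp
    have evb: "even (v b)" using evF[OF bF b0] .
    have by0: "b * y \<noteq> 0" using b0 y0 by simp
    have bsy0: "b * s y \<noteq> 0" using b0 qc_nz[OF q y0] by simp
    show False
    proof (cases "a = 0")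
      case True then have "v p = v b + m" using vby by (simp add: pab)
      then show False using vp evb evm by presburger
    next
      case a0: False
      have eva: "even (v a)" using evF[OF aF a0] .
      show False
      proof (cases "v a = v (b * y)")
        case False
        then have "v p = min (v a) (v (b * y))" using dv_strict2[OF d a0 by0] by (simp add: pab)
        then show False using vp eva evb evm vby by (simp add: min_def split: if_splits; presburger)
      next
        case True
        then have "v a \<noteq> v (b * s y)" using vby vbsy m0 by simp
        then have "v (s p) = min (v a) (v (b * s y))" using dv_strict2[OF d a0 bsy0] by (simp add: spab)
        then show False using oddsp eva evb evm vbsy by (simp add: min_def split: if_splits; presburger)
      qed
    qed
  qed
qed


lemma ram_idx: "ramified v s \<Longrightarrow> ram_index v s = 2"
  unfolding ram_index_def by simp

lemma pF_iff: "ramified v s \<Longrightarrow> a \<in> pF v s m \<longleftrightarrow> s a = a \<and> (a = 0 \<or> 2 * m \<le> v a)"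
  unfolding pF_def Fld_def using ram_idx[of v s] by simp

lemma L1:
  fixes v :: "'l::field \<Rightarrow> int"
  assumes d: "discrete_valuation v" and q: "quadratic_conj s" and r: "ramified v s"
    and tau: "add_char_conductor v s \<tau> c" and x: "x \<noteq> 0"
    and H: "\<forall>u\<in>pF v s n. \<tau> (u * Nm s x) = 1"
  shows "c - n \<le> v x"
proof -
  define N where "N = Nm s x"
  have sx: "s x \<noteq> 0" using qc_nz[OF q x] .
  have N0: "N \<noteq> 0" using x sx by (simp add: N_def Nm_def)
  have vN: "v N = 2 * v x" using dv_mult[OF d x sx] v_sigma[OF d q r x] by (simp add: N_def Nm_def)
  have sN: "s N = N" using Nm_Fld[OF q, of x] by (simp add: N_def Fld_def)
  have "\<forall>a\<in>pF v s (n + v x). \<tau> a = 1"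
  proof
    fix a assume a: "a \<in> pF v s (n + v x)"
    then have sa: "s a = a" and av: "a = 0 \<or> 2 * (n + v x) \<le> v a" using pF_iff[OF r] by auto
    define u where "u = a / N"
    have su: "s u = u" using sa sN q by (simp add: u_def qc_divide)
    have "u = 0 \<or> 2 * n \<le> v u"
    proof (cases "a = 0")
      case True then show ?thesis by (simp add: u_def)
    next
      case False
      have "v u = v a - 2 * v x" using dv_mult[OF d False, of "inverse N"] dv_inv[OF d N0] N0 vN
        by (simp add: u_def divide_inverse)
      then show ?thesis using av False by simp
    qed
    then have "u \<in> pF v s n" using su pF_iff[OF r] by simp
    then have "\<tau> (u * N) = 1" using H by (simp add: N_def)
    moreover have "u * N = a" using N0 by (simp add: u_def)
    ultimately show "\<tau> a = 1" by simp
  qed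
  then have "c \<le> n + v x" using tau unfolding add_char_conductor_def by blast
  then show ?thesis by simp
qed

lemma tr_lemma:
  fixes v :: "'l::field \<Rightarrow> int"
  assumes d: "discrete_valuation v" and q: "quadratic_conj s" and r: "ramified v s"
    and tau: "add_char_conductor v s \<tau> c"
    and a: "a = 0 \<or> c + n - 1 \<le> v a" and y: "y = 0 \<or> c - n \<le> v y"
  shows "\<tau> (tr s (a * y)) = 1"
proof -
  have tF: "s (tr s (a * y)) = tr s (a * y)" using tr_Fld[OF q] by (simp add: Fld_def)
  have "tr s (a * y) = 0 \<or> 2 * c \<le> v (tr s (a * y))"
  proof (cases "a = 0 \<or> y = 0")
    case True then show ?thesis using qc_0[OF q] by (auto simp: tr_def)
  next
    case False
    define z where "z = a * y"
    have z0: "z \<noteq> 0" using False by (simp add: z_def)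
    have vz: "2 * c - 1 \<le> v z" using dv_mult[OF d, of a y] False a y by (simp add: z_def)
    have sz: "s z \<noteq> 0" "v (s z) = v z" using qc_nz[OF q z0] v_sigma[OF d q r z0] by auto
    show ?thesis
    proof (cases "z + s z = 0")
      case True then show ?thesis by (simp add: tr_def z_def)
    next
      case nz: False
      have ge: "2 * c - 1 \<le> v (z + s z)" using dv_ge[OF d z0 sz(1) nz] sz(2) vz by simp
      have "even (v (z + s z))" using even_F[OF r, of "z + s z"] tr_Fld[OF q, of z] nz
        by (simp add: tr_def)
      then have "2 * c \<le> v (z + s z)" using ge by presburger
      then show ?thesis by (simp add: tr_def z_def)
    qed
  qed
  then have "tr s (a * y) \<in> pF v s c" using tF pF_iff[OF r] by simp
  then show ?thesis using tau unfolding add_char_conductor_def by blast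
qed

theorem lemma8p4:
  fixes v :: "'l::field \<Rightarrow> int" and \<sigma> :: "'l \<Rightarrow> 'l"
    and \<tau> :: "'l \<Rightarrow> complex" and c :: int
    and \<chi> :: "'l \<Rightarrow> complex"
    and I :: "('l \<Rightarrow> complex) \<Rightarrow> complex"
    and \<pi> :: "'l mat2 \<Rightarrow> ('l \<Rightarrow> complex) \<Rightarrow> ('l \<Rightarrow> complex)"
    and n :: int and \<Phi> :: "'l \<Rightarrow> complex"
  assumes padic: "padic_field v"
    and p_odd: "v 2 = 0"
    and conj: "quadratic_conj \<sigma>"
    and ram: "ramified v \<sigma>"
    and tau: "add_char_conductor v \<sigma> \<tau> c"
    and chi: "mult_char v \<chi>" "\<not> factors_through_norm \<sigma> \<chi>"
    and haar: "haar_integral v I"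
    and selfdual: "\<forall>\<Psi>. schwartz v \<Psi> \<longrightarrow> fourier \<sigma> \<tau> I (fourier \<sigma> \<tau> I \<Psi>) = (\<lambda>x. \<Psi> (- x))"
    and rep: "irred_rep (Gplus \<sigma>) \<pi> (S_chi v \<sigma> \<chi>)"
    and weil: "weil_formulas v \<sigma> \<tau> I \<chi> \<pi>"
    and n: "1 \<le> n"
    and Phi: "\<Phi> \<in> S_chi v \<sigma> \<chi>"
    and fixed: "\<forall>g \<in> Kcong v \<sigma> n. \<pi> g \<Phi> = \<Phi>"
  shows "{x. \<Phi> x \<noteq> 0} \<subseteq> pL v (c - n) \<and>
         (\<forall>x y. x - y \<in> pL v (c + n - 1) \<longrightarrow> \<Phi> x = \<Phi> y)"
proof -
  have d: "discrete_valuation v" using padic unfolding padic_field_def by blast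
  note q = conj and r = ram
  let ?S = "S_chi v \<sigma> \<chi>"
  have W1: "\<forall>u \<in> Fld \<sigma>. \<forall>\<Phi> \<in> ?S. \<pi> (1, u, 0, 1) \<Phi> = (\<lambda>x. \<tau> (u * Nm \<sigma> x) * \<Phi> x)"
    using weil unfolding weil_formulas_def by (elim conjE) assumption
  obtain \<gamma> where g1: "cmod \<gamma> = 1"
    and W3: "\<forall>\<Phi> \<in> ?S. \<pi> (0, 1, -1, 0) \<Phi> = (\<lambda>x. \<gamma> * fourier \<sigma> \<tau> I \<Phi> (\<sigma> x))"
    using weil unfolding weil_formulas_def by (elim conjE) blast
  have R1: "\<forall>g\<in>Gplus \<sigma>. \<forall>\<Phi>\<in>?S. \<pi> g \<Phi> \<in> ?S"
    using rep unfolding irred_rep_def by (elim conjE) assumption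
  have R5: "\<forall>g\<in>Gplus \<sigma>. \<forall>h\<in>Gplus \<sigma>. \<forall>\<Phi>\<in>?S. \<pi> (mmul g h) \<Phi> = \<pi> g (\<pi> h \<Phi>)"
    using rep unfolding irred_rep_def by (elim conjE) assumption
  have s0: "\<sigma> 0 = 0" and s1: "\<sigma> 1 = 1" using qc_0[OF q] qc_1[OF q] by auto
  have n1: "Nm \<sigma> 1 = 1" using s1 by (simp add: Nm_def)
  have one_norm: "(1::'l) \<in> norms \<sigma>" unfolding norms_def using n1 by force
  have v1: "v 1 = 0" using dv_1[OF d] .
  have Kmem: "(1, u, 0, 1) \<in> Kcong v \<sigma> n \<and> (1, 0, - u, 1) \<in> Kcong v \<sigma> n" if u: "u \<in> pF v \<sigma> n" for u
  proof -
    have "\<sigma> u = u" "u = 0 \<or> 2 * n \<le> v u" using u pF_iff[OF r] by auto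
    then have "- u \<in> pF v \<sigma> n" using pF_iff[OF r] qc_neg[OF q] dv_neg[OF d] by simp
    moreover have "(0::'l) \<in> pF v \<sigma> n" "(1::'l) \<in> pF v \<sigma> 0" using pF_iff[OF r] s0 s1 v1 by auto
    ultimately show ?thesis using u unfolding Kcong_def by simp
  qed
  have Gu: "(1, u, 0, 1) \<in> Gplus \<sigma> \<and> (1, 0, - u, 1) \<in> Gplus \<sigma>" if u: "u \<in> Fld \<sigma>" for u
    using u s0 s1 one_norm qc_neg[OF q, of u] unfolding Gplus_def Fld_def by simp
  have Gw: "(0, 1, - 1, 0) \<in> Gplus \<sigma>"
    using s0 s1 one_norm qc_neg[OF q, of 1] unfolding Gplus_def Fld_def by simp
  have pFF: "u \<in> Fld \<sigma>" if "u \<in> pF v \<sigma> n" for u using that unfolding pF_def by simp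
  have supp: "\<forall>x. \<Psi> x \<noteq> 0 \<longrightarrow> x = 0 \<or> c - n \<le> v x"
    if P: "\<Psi> \<in> ?S" and inv: "\<forall>u\<in>pF v \<sigma> n. \<pi> (1, u, 0, 1) \<Psi> = \<Psi>" for \<Psi>
  proof (intro allI impI)
    fix x assume px: "\<Psi> x \<noteq> 0"
    show "x = 0 \<or> c - n \<le> v x"
    proof (cases "x = 0")
      case False
      have "\<forall>u\<in>pF v \<sigma> n. \<tau> (u * Nm \<sigma> x) = 1"
      proof
        fix u assume u: "u \<in> pF v \<sigma> n"
        have "\<pi> (1, u, 0, 1) \<Psi> = (\<lambda>x. \<tau> (u * Nm \<sigma> x) * \<Psi> x)" using W1 pFF[OF u] P by blast
        then have "\<tau> (u * Nm \<sigma> x) * \<Psi> x = \<Psi> x" using inv u by metis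
        then show "\<tau> (u * Nm \<sigma> x) = 1" using px by simp
      qed
      then show ?thesis using L1[OF d q r tau False] by simp
    qed simp
  qed
  have part1: "{x. \<Phi> x \<noteq> 0} \<subseteq> pL v (c - n)"
  proof -
    have "\<forall>u\<in>pF v \<sigma> n. \<pi> (1, u, 0, 1) \<Phi> = \<Phi>" using fixed Kmem by blast
    then show ?thesis using supp[OF Phi] unfolding pL_def by blast
  qed
  define F where "F = fourier \<sigma> \<tau> I \<Phi>"
  define \<Psi>0 where "\<Psi>0 = \<pi> (0, 1, - 1, 0) \<Phi>"
  have P0: "\<Psi>0 \<in> ?S" using R1 Gw Phi by (simp add: \<Psi>0_def)
  have P0e: "\<Psi>0 = (\<lambda>x. \<gamma> * F (\<sigma> x))" using W3 Phi by (simp add: \<Psi>0_def F_def)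
  have inv0: "\<forall>u\<in>pF v \<sigma> n. \<pi> (1, u, 0, 1) \<Psi>0 = \<Psi>0"
  proof
    fix u assume u: "u \<in> pF v \<sigma> n"
    have m: "mmul (1, u, 0, 1) (0, 1, - 1, 0) = mmul (0, 1, - 1, 0) (1, 0, - u, 1)" by simp
    have "\<pi> (1, u, 0, 1) \<Psi>0 = \<pi> (mmul (1, u, 0, 1) (0, 1, - 1, 0)) \<Phi>"
      using R5 Gu[OF pFF[OF u]] Gw Phi unfolding \<Psi>0_def by metis
    also have "\<dots> = \<pi> (0, 1, - 1, 0) (\<pi> (1, 0, - u, 1) \<Phi>)"
      unfolding m using R5 Gu[OF pFF[OF u]] Gw Phi by blast
    also have "\<dots> = \<Psi>0" using fixed Kmem[OF u] by (simp add: \<Psi>0_def)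
    finally show "\<pi> (1, u, 0, 1) \<Psi>0 = \<Psi>0" .
  qed
  have g0: "\<gamma> \<noteq> 0" using g1 by auto
  have Fsupp: "F y = 0 \<or> y = 0 \<or> c - n \<le> v y" for y
  proof (cases "F y = 0")
    case False
    have "\<Psi>0 (\<sigma> y) \<noteq> 0" using False g0 qc_invol[OF q, of y] by (simp add: P0e)
    then have "\<sigma> y = 0 \<or> c - n \<le> v (\<sigma> y)" using supp[OF P0 inv0] by blast
    moreover have "\<sigma> y \<noteq> 0" if "y \<noteq> 0" using qc_nz[OF q that] .
    moreover have "v (\<sigma> y) = v y" if "y \<noteq> 0" using v_sigma[OF d q r that] .
    ultimately show ?thesis by force
  qed simp
  have schw: "schwartz v \<Phi>" using Phi unfolding S_chi_def by simp
  have FF: "\<Phi> x = fourier \<sigma> \<tau> I F (- x)" for x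
  proof -
    have "fourier \<sigma> \<tau> I F = (\<lambda>x. \<Phi> (- x))" using selfdual schw unfolding F_def by blast
    then show ?thesis by simp
  qed
  have part2: "\<forall>x y. x - y \<in> pL v (c + n - 1) \<longrightarrow> \<Phi> x = \<Phi> y"
  proof (intro allI impI)
    fix x x' assume xx: "x - x' \<in> pL v (c + n - 1)"
    define a where "a = x' - x"
    have a1: "x - x' = 0 \<or> c + n - 1 \<le> v (x - x')" using xx unfolding pL_def by simp
    have a2: "a = - (x - x')" by (simp add: a_def)
    have a: "a = 0 \<or> c + n - 1 \<le> v a" using a1 unfolding a2 dv_neg[OF d] by auto
    have tadd: "\<tau> (p + q') = \<tau> p * \<tau> q'" if "p \<in> Fld \<sigma>" "q' \<in> Fld \<sigma>" for p q'
      using tau that unfolding add_char_conductor_def by blast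
    have eq: "F y * \<tau> (tr \<sigma> (- x * y)) = F y * \<tau> (tr \<sigma> (- x' * y))" for y
    proof (cases "F y = 0")
      case False
      then have yv: "y = 0 \<or> c - n \<le> v y" using Fsupp by blast
      have "tr \<sigma> (- x * y) = tr \<sigma> (- x' * y) + tr \<sigma> (a * y)"
      proof -
        have e: "- x * y = - x' * y + a * y" by (simp add: a_def algebra_simps)
        have "tr \<sigma> (- x * y) = tr \<sigma> (- x' * y + a * y)" by (subst e) (rule refl)
        also have "\<dots> = tr \<sigma> (- x' * y) + tr \<sigma> (a * y)"
          unfolding tr_def qc_add[OF q] by (simp only: add_ac)
        finally show ?thesis .
      qed
      then have "\<tau> (tr \<sigma> (- x * y)) = \<tau> (tr \<sigma> (- x' * y)) * \<tau> (tr \<sigma> (a * y))"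
        using tadd tr_Fld[OF q] by simp
      then show ?thesis using tr_lemma[OF d q r tau a yv] by simp
    qed simp
    have "\<Phi> x = fourier \<sigma> \<tau> I F (- x)" by (rule FF)
    also have "\<dots> = fourier \<sigma> \<tau> I F (- x')" unfolding fourier_def using eq by presburger
    also have "\<dots> = \<Phi> x'" by (rule FF[symmetric])
    finally show "\<Phi> x = \<Phi> x'" .
  qed
  show ?thesis using part1 part2 by blast
qed

end
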